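(* Let $H$ be a monoid such that $\mathcal{P}_{\mathrm{fin},1}(H)$ is UmF. Then: (i) the group of units $H^\times$ of $H$ has order $\le 2$; (ii) $uy=yu=y$ for all $u\in H^\times$ and $y\in H\setminus H^\times$; (iii) $H\setminus H^\times$ is an almost-breakable semigroup.
   Context: $\mathcal{P}_{\mathrm{fin},1}(H)$ denotes the set of non-empty finite subsets of $H$ containing $1_H$, a monoid under $XY=\{xy:x\in X,y\in Y\}$. In a monoid $M$: $x\mid_M y$ iff $y\in MxM$; $x,y$ are associated if each divides the other; proper divisor means divides but not associated. A unit-divisor divides $1_M$; otherwise it is a non-unit-divisor. An irreducible is a non-unit-divisor $a$ with $a\neq xy$ for all non-unit-divisors $x,y$ properly dividing $a$. A factorization of $x$ is a finite word over the irreducibles with product $x$. For words $\mathfrak a,\mathfrak b$, $\mathfrak a\sqsubseteq\mathfrak b$ means $\mathfrak a$ is, up to associatedness of letters, a subword (subsequence) of some permutation of $\mathfrak b$; equivalence means $\sqsubseteq$ both ways. A factorization $\mathfrak a$ of $x$ is minimal if no factorization $\mathfrak b$ of $x$ satisfies $\mathfrak b\sqsubseteq\mathfrak a\not\sqsubseteq\mathfrak b$. $M$ is UmF if every non-unit-divisor has a factorization and any two minimal factorizations of an element are equivalent. A semigroup $S$ is almost-breakable if for all $x,y\in S$, $xy\in\{x,y\}$ or $yx\in\{x,y\}$. *)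

theory Defs
  imports Main "HOL-Library.Multiset" "HOL-Library.Sublist"
begin

(* A monoid is given abstractly by a carrier M, a multiplication f and an identity e. *)

definition mdvd :: "'b set \<Rightarrow> ('b \<Rightarrow> 'b \<Rightarrow> 'b) \<Rightarrow> 'b \<Rightarrow> 'b \<Rightarrow> bool" where
  "mdvd M f x y \<longleftrightarrow> (\<exists>a\<in>M. \<exists>b\<in>M. y = f (f a x) b)"

definition massoc :: "'b set \<Rightarrow> ('b \<Rightarrow> 'b \<Rightarrow> 'b) \<Rightarrow> 'b \<Rightarrow> 'b \<Rightarrow> bool" where
  "massoc M f x y \<longleftrightarrow> mdvd M f x y \<and> mdvd M f y x"

definition mproper_dvd :: "'b set \<Rightarrow> ('b \<Rightarrow> 'b \<Rightarrow> 'b) \<Rightarrow> 'b \<Rightarrow> 'b \<Rightarrow> bool" where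
  "mproper_dvd M f x y \<longleftrightarrow> mdvd M f x y \<and> \<not> massoc M f x y"

definition unit_divisor :: "'b set \<Rightarrow> ('b \<Rightarrow> 'b \<Rightarrow> 'b) \<Rightarrow> 'b \<Rightarrow> 'b \<Rightarrow> bool" where
  "unit_divisor M f e x \<longleftrightarrow> mdvd M f x e"

definition non_unit_divisor :: "'b set \<Rightarrow> ('b \<Rightarrow> 'b \<Rightarrow> 'b) \<Rightarrow> 'b \<Rightarrow> 'b \<Rightarrow> bool" where
  "non_unit_divisor M f e x \<longleftrightarrow> x \<in> M \<and> \<not> unit_divisor M f e x"

definition mirreducible :: "'b set \<Rightarrow> ('b \<Rightarrow> 'b \<Rightarrow> 'b) \<Rightarrow> 'b \<Rightarrow> 'b \<Rightarrow> bool" where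
  "mirreducible M f e a \<longleftrightarrow> non_unit_divisor M f e a \<and>
     \<not> (\<exists>x y. non_unit_divisor M f e x \<and> non_unit_divisor M f e y \<and>
            mproper_dvd M f x a \<and> mproper_dvd M f y a \<and> a = f x y)"

definition wprod :: "('b \<Rightarrow> 'b \<Rightarrow> 'b) \<Rightarrow> 'b \<Rightarrow> 'b list \<Rightarrow> 'b" where
  "wprod f e w = foldr f w e"

definition factorization :: "'b set \<Rightarrow> ('b \<Rightarrow> 'b \<Rightarrow> 'b) \<Rightarrow> 'b \<Rightarrow> 'b list \<Rightarrow> 'b \<Rightarrow> bool" where
  "factorization M f e w x \<longleftrightarrow> (\<forall>a\<in>set w. mirreducible M f e a) \<and> wprod f e w = x"

definition wsub :: "'b set \<Rightarrow> ('b \<Rightarrow> 'b \<Rightarrow> 'b) \<Rightarrow> 'b list \<Rightarrow> 'b list \<Rightarrow> bool" where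
  "wsub M f a b \<longleftrightarrow> (\<exists>p c. mset p = mset b \<and> subseq c p \<and> list_all2 (massoc M f) a c)"

definition wequiv :: "'b set \<Rightarrow> ('b \<Rightarrow> 'b \<Rightarrow> 'b) \<Rightarrow> 'b list \<Rightarrow> 'b list \<Rightarrow> bool" where
  "wequiv M f a b \<longleftrightarrow> wsub M f a b \<and> wsub M f b a"

definition minimal_factorization :: "'b set \<Rightarrow> ('b \<Rightarrow> 'b \<Rightarrow> 'b) \<Rightarrow> 'b \<Rightarrow> 'b list \<Rightarrow> 'b \<Rightarrow> bool" where
  "minimal_factorization M f e a x \<longleftrightarrow> factorization M f e a x \<and>
     \<not> (\<exists>b. factorization M f e b x \<and> wsub M f b a \<and> \<not> wsub M f a b)"

definition UmF :: "'b set \<Rightarrow> ('b \<Rightarrow> 'b \<Rightarrow> 'b) \<Rightarrow> 'b \<Rightarrow> bool" where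
  "UmF M f e \<longleftrightarrow>
     (\<forall>x. non_unit_divisor M f e x \<longrightarrow> (\<exists>a. factorization M f e a x)) \<and>
     (\<forall>x\<in>M. \<forall>a b. minimal_factorization M f e a x \<and> minimal_factorization M f e b x
                 \<longrightarrow> wequiv M f a b)"

definition Pfin1 :: "'a::monoid_mult set set" where
  "Pfin1 = {X. finite X \<and> X \<noteq> {} \<and> 1 \<in> X}"

definition setmul :: "'a::monoid_mult set \<Rightarrow> 'a set \<Rightarrow> 'a set" where
  "setmul X Y = {x * y | x y. x \<in> X \<and> y \<in> Y}"

definition munits :: "'a::monoid_mult set" where
  "munits = {u. \<exists>v. u * v = 1 \<and> v * u = 1}"

definition almost_breakable :: "'a::monoid_mult set \<Rightarrow> bool" where
  "almost_breakable S \<longleftrightarrow> (\<forall>x\<in>S. \<forall>y\<in>S. x * y \<in> {x, y} \<or> y * x \<in> {x, y})"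

end

theory Submission imports Defs begin

lemma subseq_mset: "subseq c p \<Longrightarrow> mset c \<subseteq># mset p"
  by (induction rule: list_emb.induct) (auto intro: subset_mset.order_trans)

lemma sm_ins: "setmul (insert a X) Y = (\<lambda>y. a*y) ` Y \<union> setmul X Y"
  unfolding setmul_def by auto
lemma sm_empty[simp]: "setmul {} Y = {}" "setmul Y {} = {}"
  unfolding setmul_def by auto
lemma sm_one[simp]: "setmul {1} X = X" "setmul X {1} = X"
  unfolding setmul_def by auto

lemma sub_prod: "1\<in>A \<Longrightarrow> 1\<in>B \<Longrightarrow> X \<subseteq> setmul (setmul A X) B"
  unfolding setmul_def by force

lemma one_Pfin1[simp]: "{1} \<in> Pfin1" unfolding Pfin1_def by auto

lemma mdvd_sub: "mdvd Pfin1 setmul X Y \<Longrightarrow> X \<subseteq> Y"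
  unfolding mdvd_def Pfin1_def using sub_prod by blast

lemma mdvd_refl: "mdvd Pfin1 setmul X X"
  unfolding mdvd_def by (rule bexI[of _ "{1}"], rule bexI[of _ "{1}"]) auto

lemma massoc_eq: "massoc Pfin1 setmul X Y \<longleftrightarrow> X = Y"
  unfolding massoc_def using mdvd_sub mdvd_refl by blast

lemma mproper: "mproper_dvd Pfin1 setmul X Y \<Longrightarrow> X \<subseteq> Y \<and> X \<noteq> Y"
  unfolding mproper_dvd_def using mdvd_sub massoc_eq by blast

lemma unit_div: "unit_divisor Pfin1 setmul {1} X \<longleftrightarrow> X = {1}"
proof
  assume "unit_divisor Pfin1 setmul {1} X"
  then have d: "mdvd Pfin1 setmul X {1}" unfolding unit_divisor_def .
  then have "X \<subseteq> {1}" by (rule mdvd_sub)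
  moreover have "X \<noteq> {}" using d unfolding mdvd_def by auto
  ultimately show "X = {1}" by auto
next
  assume "X = {1}" then show "unit_divisor Pfin1 setmul {1} X"
    unfolding unit_divisor_def using mdvd_refl by simp
qed

lemma nud: "non_unit_divisor Pfin1 setmul {1} X \<longleftrightarrow> X \<in> Pfin1 \<and> X \<noteq> {1}"
  unfolding non_unit_divisor_def using unit_div by blast

lemma irr2: "(x::'a::monoid_mult) \<noteq> 1 \<Longrightarrow> mirreducible Pfin1 setmul {1} {1,x}"
  unfolding mirreducible_def nud
proof (intro conjI notI)
  assume x: "x \<noteq> 1"
  show "{1,x} \<in> Pfin1" by (simp add: Pfin1_def)
  show "{1,x} = {1::'a} \<Longrightarrow> False" using x by auto
  assume "\<exists>X Y. (X \<in> Pfin1 \<and> X \<noteq> {1}) \<and> (Y \<in> Pfin1 \<and> Y \<noteq> {1}) \<and>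
      mproper_dvd Pfin1 setmul X {1,x} \<and> mproper_dvd Pfin1 setmul Y {1,x} \<and> {1,x} = setmul X Y"
  then obtain X where h: "X \<in> Pfin1" "X \<noteq> {1}" "X \<subseteq> {1,x}" "X \<noteq> {1,x}"
    using mproper by blast
  then show False unfolding Pfin1_def by auto
qed


lemma sub3: "1\<in>X \<Longrightarrow> X \<subseteq> {1,x,y} \<Longrightarrow> X \<noteq> {1} \<Longrightarrow> X \<noteq> {1,x,y} \<Longrightarrow> X = {1,x} \<or> X = {1,y}"
proof -
  assume a: "1\<in>X" "X \<subseteq> {1,x,y}" "X \<noteq> {1}" "X \<noteq> {1,x,y}"
  show ?thesis
  proof (cases "x \<in> X")
    case True
    then have "y \<notin> X" using a by blast
    then show ?thesis using a True by blast
  next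
    case False
    then show ?thesis using a by blast
  qed
qed

lemma p2: "setmul {1,a} {1,b} = {1,b,a,a*(b::'a::monoid_mult)}" by (simp add: sm_ins insert_commute)
lemma irr3:
  fixes x y :: "'a::monoid_mult"
  assumes "x \<noteq> 1" "y \<noteq> 1" "x \<noteq> y" "x*x = x" "y*y = y" "x*y \<notin> {1,x,y}" "y*x \<notin> {1,x,y}"
  shows "mirreducible Pfin1 setmul {1} {1,x,y}"
  unfolding mirreducible_def nud
proof (intro conjI notI)
  show "{1,x,y} \<in> Pfin1" by (simp add: Pfin1_def)
  show "{1,x,y} = {1::'a} \<Longrightarrow> False" using assms by auto
  assume "\<exists>X Y. (X \<in> Pfin1 \<and> X \<noteq> {1}) \<and> (Y \<in> Pfin1 \<and> Y \<noteq> {1}) \<and>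
      mproper_dvd Pfin1 setmul X {1,x,y} \<and> mproper_dvd Pfin1 setmul Y {1,x,y} \<and> {1,x,y} = setmul X Y"
  then obtain X Y where h: "X \<in> Pfin1" "X \<noteq> {1}" "Y \<in> Pfin1" "Y \<noteq> {1}"
     "X \<subseteq> {1,x,y}" "X \<noteq> {1,x,y}" "Y \<subseteq> {1,x,y}" "Y \<noteq> {1,x,y}" "{1,x,y} = setmul X Y"
  proof -
    assume r: "\<And>X Y. X \<in> Pfin1 \<Longrightarrow> X \<noteq> {1} \<Longrightarrow> Y \<in> Pfin1 \<Longrightarrow> Y \<noteq> {1} \<Longrightarrow>
     X \<subseteq> {1,x,y} \<Longrightarrow> X \<noteq> {1,x,y} \<Longrightarrow> Y \<subseteq> {1,x,y} \<Longrightarrow> Y \<noteq> {1,x,y} \<Longrightarrow> {1,x,y} = setmul X Y \<Longrightarrow> thesis"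
    from \<open>\<exists>X Y. _\<close> obtain X Y where "(X \<in> Pfin1 \<and> X \<noteq> {1}) \<and> (Y \<in> Pfin1 \<and> Y \<noteq> {1}) \<and>
      mproper_dvd Pfin1 setmul X {1,x,y} \<and> mproper_dvd Pfin1 setmul Y {1,x,y} \<and> {1,x,y} = setmul X Y" by blast
    then show thesis using r mproper[of X "{1,x,y}"] mproper[of Y "{1,x,y}"] by blast
  qed
  have cX: "X = {1,x} \<or> X = {1,y}" using h(1,2,5,6) unfolding Pfin1_def by (intro sub3) auto
  have cY: "Y = {1,x} \<or> Y = {1,y}" using h(3,4,7,8) unfolding Pfin1_def by (intro sub3) auto
  have yin: "y \<in> setmul X Y" and xyin: "x*y \<in> setmul X Y \<Longrightarrow> False" and yxin: "y*x \<in> setmul X Y \<Longrightarrow> False"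
      and xin: "x \<in> setmul X Y"
  proof -
    have m: "z \<in> setmul X Y \<longleftrightarrow> z = 1 \<or> z = x \<or> z = y" for z using h(9)[symmetric] by simp
    show "y \<in> setmul X Y" "x \<in> setmul X Y" using m by blast+
    show "x*y \<in> setmul X Y \<Longrightarrow> False" "y*x \<in> setmul X Y \<Longrightarrow> False" using m assms(6,7) by blast+
  qed
  show False
  proof (cases "X = {1,x}")
    case X: True
    show False
    proof (cases "Y = {1,x}")
      case True
      then show False using X yin assms(3,2,4) by (auto simp: p2)
    next
      case False
      then have "Y = {1,y}" using cY by blast
      then show False using X xyin by (auto simp: p2)
    qed
  next
    case False
    then have X: "X = {1,y}" using cX by blast
    show False
    proof (cases "Y = {1,x}")
      case True
      then show False using X yxin by (auto simp: p2)
    next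
      case False
      then have "Y = {1,y}" using cY by blast
      then show False using X xin assms(1,3,5) by (auto simp: p2)
    qed
  qed
qed


lemma massoc_fun: "massoc Pfin1 setmul = (=)"
  by (intro ext) (simp add: massoc_eq)

lemma wsub_mset: "wsub Pfin1 setmul b a \<Longrightarrow> mset b \<subseteq># mset a"
proof -
  assume "wsub Pfin1 setmul b a"
  then obtain p c where "mset p = mset a" "subseq c p" "list_all2 (massoc Pfin1 setmul) b c"
    unfolding wsub_def by blast
  then have "mset p = mset a" "subseq b p" unfolding massoc_fun list.rel_eq by simp_all
  then show ?thesis using subseq_mset by metis
qed

lemma wsub_eq: "mset a = mset b \<Longrightarrow> wsub Pfin1 setmul a b"
  unfolding wsub_def massoc_fun list.rel_eq by blast

lemma min_intro:
  assumes f: "factorization Pfin1 setmul {1} a X"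
    and nb: "\<And>b. set b \<subseteq> set a \<Longrightarrow> length b < length a \<Longrightarrow> wprod setmul {1} b \<noteq> X"
  shows "minimal_factorization Pfin1 setmul {1} a X"
  unfolding minimal_factorization_def
proof (intro conjI notI)
  show "factorization Pfin1 setmul {1} a X" by (rule f)
  assume "\<exists>b. factorization Pfin1 setmul {1} b X \<and> wsub Pfin1 setmul b a \<and> \<not> wsub Pfin1 setmul a b"
  then obtain b where b: "factorization Pfin1 setmul {1} b X" "wsub Pfin1 setmul b a" "\<not> wsub Pfin1 setmul a b"
    by blast
  have s: "mset b \<subseteq># mset a" using b(2) by (rule wsub_mset)
  have "mset b \<noteq> mset a" using b(3) wsub_eq by metis
  then have ss: "mset b \<subset># mset a" using s by simp
  then have "length b < length a" by (metis mset_subset_size size_mset)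
  moreover have "set b \<subseteq> set a" using s by (metis set_mset_mono set_mset_mset)
  moreover have "wprod setmul {1} b = X" using b(1) unfolding factorization_def by simp
  ultimately show False using nb by metis
qed

lemma conflict:
  fixes X :: "'a::monoid_mult set"
  assumes U: "UmF (Pfin1 :: 'a::monoid_mult set set) setmul {1}"
    and X: "X \<in> Pfin1" and a: "minimal_factorization Pfin1 setmul {1} a X"
    and b: "minimal_factorization Pfin1 setmul {1} b X" and d: "mset a \<noteq> mset b"
  shows False
proof -
  have u: "\<forall>x\<in>(Pfin1::'a set set). \<forall>a b. minimal_factorization Pfin1 setmul {1} a x \<and> minimal_factorization Pfin1 setmul {1} b x
                 \<longrightarrow> wequiv Pfin1 setmul a b" using U unfolding UmF_def by (rule conjunct2)
  have "wequiv Pfin1 setmul a b" using u X a b by blast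
  then have "mset a \<subseteq># mset b" "mset b \<subseteq># mset a" unfolding wequiv_def using wsub_mset by blast+
  then show False using d by simp
qed

lemma wprod2[simp]: "wprod setmul {1} [A,B] = setmul A B"
  by (simp add: wprod_def)
lemma wprod3[simp]: "wprod setmul {1} [A,B,C] = setmul A (setmul B C)"
  by (simp add: wprod_def)
lemma wprod1[simp]: "wprod setmul {1} [A] = A" "wprod setmul {1} [] = {1}"
  by (simp_all add: wprod_def)

lemma min2:
  assumes "mirreducible Pfin1 setmul {1} A" "mirreducible Pfin1 setmul {1} B"
    "setmul A B \<noteq> A" "setmul A B \<noteq> B" "setmul A B \<noteq> {1}"
  shows "minimal_factorization Pfin1 setmul {1} [A,B] (setmul A B)"
proof (rule min_intro)
  show "factorization Pfin1 setmul {1} [A, B] (setmul A B)"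
    using assms(1,2) unfolding factorization_def wprod2 by simp
  fix b assume b: "set b \<subseteq> set [A,B]" "length b < length [A,B]"
  then have "b = [] \<or> b = [A] \<or> b = [B]"
  proof (cases b)
    case (Cons c r)
    then show ?thesis using b by (cases r) auto
  qed simp
  then show "wprod setmul {1} b \<noteq> setmul A B" using assms(3-5) by (elim disjE) (metis wprod1)+
qed


lemma neqI: "z \<in> S \<Longrightarrow> z \<notin> T \<Longrightarrow> S \<noteq> T" by auto

lemma sq:
  assumes U: "UmF (Pfin1 :: 'a::monoid_mult set set) setmul {1}"
  shows "x*x = 1 \<or> x*x = (x::'a)"
proof (rule ccontr)
  assume "\<not> (x*x = 1 \<or> x*x = x)"
  then have n: "x*x \<noteq> 1" "x*x \<noteq> x" "x \<noteq> 1" "1 \<noteq> x*x" "x \<noteq> x*x" "1 \<noteq> x" by auto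
  define A where "A = {1,x}"
  define A2 where "A2 = {1,x*x}"
  have iA: "mirreducible Pfin1 setmul {1} A" unfolding A_def using n by (intro irr2)
  have iA2: "mirreducible Pfin1 setmul {1} A2" unfolding A2_def using n by (intro irr2)
  have AA: "setmul A A = {1,x,x*x}" unfolding A_def p2 by auto
  have AA2: "setmul A A2 = {1,x,x*x,x*(x*x)}" unfolding A_def A2_def p2 by auto
  have AneA2: "A \<noteq> A2" unfolding A_def A2_def using n by auto
  show False
  proof (cases "x*(x*x) \<in> {1,x,x*x}")
    case True
    have e: "setmul A A2 = setmul A A" unfolding AA2 AA using True by auto
    have d1: "{1,x,x*x} \<noteq> A" unfolding A_def by (intro neqI[of "x*x"]) (use n in auto)
    have d2: "{1,x,x*x} \<noteq> A2" unfolding A2_def by (intro neqI[of "x"]) (use n in auto)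
    have d3: "{1,x,x*x} \<noteq> {1}" by (intro neqI[of "x"]) (use n in auto)
    have m1: "minimal_factorization Pfin1 setmul {1} [A,A] (setmul A A)"
      by (rule min2[OF iA iA]) (unfold AA, (rule d1 d3)+)
    have m2: "minimal_factorization Pfin1 setmul {1} [A,A2] (setmul A A)"
      unfolding e[symmetric] by (rule min2[OF iA iA2]) (unfold e AA, (rule d1 d2 d3)+)
    show False
      by (rule conflict[OF U _ m1 m2]) (unfold AA, auto simp: Pfin1_def AneA2)
  next
    case False
    have n3: "x*(x*x) \<noteq> 1" "x*(x*x) \<noteq> x" "x*(x*x) \<noteq> x*x"
     "1 \<noteq> x*(x*x)" "x \<noteq> x*(x*x)" "x*x \<noteq> x*(x*x)" using False by auto
    have AAA: "setmul A (setmul A A) = {1,x,x*x,x*(x*x)}" unfolding AA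
      by (auto simp: A_def sm_ins)
    have d1: "{1,x,x*x,x*(x*x)} \<noteq> A" unfolding A_def by (intro neqI[of "x*x"]) (use n in auto)
    have d2: "{1,x,x*x,x*(x*x)} \<noteq> A2" unfolding A2_def by (intro neqI[of "x"]) (use n in auto)
    have d3: "{1,x,x*x,x*(x*x)} \<noteq> {1}" by (intro neqI[of "x"]) (use n in auto)
    have d4: "{1,x,x*x,x*(x*x)} \<noteq> {1,x,x*x}" by (intro neqI[of "x*(x*x)"]) (use n3 in auto)
    have m2: "minimal_factorization Pfin1 setmul {1} [A,A2] (setmul A A2)"
      by (rule min2[OF iA iA2]) (unfold AA2, (rule d1 d2 d3)+)
    have m1: "minimal_factorization Pfin1 setmul {1} [A,A,A] (setmul A A2)"
    proof (rule min_intro)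
      show "factorization Pfin1 setmul {1} [A,A,A] (setmul A A2)"
        unfolding factorization_def wprod3 AAA AA2 using iA by simp
      fix b assume b: "set b \<subseteq> set [A,A,A]" "length b < length [A,A,A]"
      have "b = [] \<or> b = [A] \<or> b = [A,A]"
      proof (cases b)
        case (Cons c r)
        then show ?thesis using b by (cases r; cases "tl r") auto
      qed simp
      moreover have "{1} \<noteq> setmul A A2" "A \<noteq> setmul A A2" "setmul A A \<noteq> setmul A A2"
        unfolding AA2 AA using d1 d3 d4 by auto
      ultimately show "wprod setmul {1} b \<noteq> setmul A A2" by (metis wprod1 wprod2)
    qed
    show False
      by (rule conflict[OF U _ m1 m2]) (unfold AA2, auto simp: Pfin1_def)
  qed
qed


lemma conflict2:
  assumes U: "UmF (Pfin1 :: 'a::monoid_mult set set) setmul {1}"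
    and i: "mirreducible Pfin1 setmul {1} A" "mirreducible Pfin1 setmul {1} B"
      "mirreducible Pfin1 setmul {1} C" "mirreducible Pfin1 setmul {1} (D::'a set)"
    and e: "setmul A B = setmul C D"
    and d: "setmul A B \<noteq> A" "setmul A B \<noteq> B" "setmul A B \<noteq> C" "setmul A B \<noteq> D" "setmul A B \<noteq> {1}"
    and P: "setmul A B \<in> Pfin1" and ms: "mset [A,B] \<noteq> mset [C,D]"
  shows False
proof -
  have m1: "minimal_factorization Pfin1 setmul {1} [A,B] (setmul A B)"
    using d by (intro min2 i) auto
  have m2: "minimal_factorization Pfin1 setmul {1} [C,D] (setmul A B)"
    unfolding e using d unfolding e by (intro min2 i) auto
  show False by (rule conflict[OF U P m1 m2 ms])
qed

lemma unit_sq: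
  assumes U: "UmF (Pfin1 :: 'a::monoid_mult set set) setmul {1}" and u: "(u::'a) \<in> munits"
  shows "u*u = 1"
proof -
  obtain v where v: "u*v = 1" "v*u = 1" using u unfolding munits_def by blast
  have "u*u = 1 \<or> u*u = u" by (rule sq[OF U])
  moreover have "u*u = u \<Longrightarrow> u = 1" by (metis mult.assoc mult_1_right v(1))
  ultimately show ?thesis by auto
qed

lemma one_unit: "1 \<in> munits" unfolding munits_def by auto

lemma units_sub:
  assumes U: "UmF (Pfin1 :: 'a::monoid_mult set set) setmul {1}" and u: "(u::'a) \<in> munits"
    and u1: "u \<noteq> 1" and v: "v \<in> munits"
  shows "v \<in> {1,u}"
proof (rule ccontr)
  assume "v \<notin> {1,u}"
  then have v1: "v \<noteq> 1" "v \<noteq> u" by auto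
  have uu: "u*u = 1" using unit_sq[OF U u] .
  have vv: "v*v = 1" using unit_sq[OF U v] .
  have uuv: "u*(u*v) = v" by (metis mult.assoc mult_1_left uu)
  have w1: "u*v \<noteq> 1" using uuv v1 by (metis mult_1_right)
  have w2: "u*v \<noteq> u" using uuv v1 uu by metis
  have w3: "u*v \<noteq> v" using vv u1 by (metis mult.assoc mult_1_right)
  have e1: "setmul {1,u} {1,v} = {1,v,u,u*v}" by (rule p2)
  have e2: "setmul {1,u} {1,u*v} = {1,v,u,u*v}" unfolding p2 uuv by auto
  show False
  proof (rule conflict2[OF U irr2[OF u1] irr2[OF v1(1)] irr2[OF u1] irr2[OF w1]])
    show "setmul {1, u} {1, v} = setmul {1, u} {1, u * v}" unfolding e1 e2 ..
    show "setmul {1, u} {1, v} \<noteq> {1, u}" unfolding e1 by (rule neqI[of v]) (use v1 in auto)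
    show "setmul {1, u} {1, v} \<noteq> {1, v}" unfolding e1 by (rule neqI[of u]) (use v1 u1 in auto)
    show "setmul {1, u} {1, v} \<noteq> {1, u}" unfolding e1 by (rule neqI[of v]) (use v1 in auto)
    show "setmul {1, u} {1, v} \<noteq> {1, u*v}" unfolding e1 by (rule neqI[of u]) (use w2 u1 in auto)
    show "setmul {1, u} {1, v} \<noteq> {1}" unfolding e1 by (rule neqI[of u]) (use u1 in auto)
    show "setmul {1, u} {1, v} \<in> Pfin1" unfolding e1 by (simp add: Pfin1_def)
    have "{1,v} \<noteq> {1,u*v}" by (rule neqI[of v]) (use v1 w3 in auto)
    then show "mset [{1, u}, {1, v}] \<noteq> mset [{1, u}, {1, u * v}]" by simp
  qed
qed

lemma unit_left:
  assumes U: "UmF (Pfin1 :: 'a::monoid_mult set set) setmul {1}" and u: "(u::'a) \<in> munits"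
    and y: "y \<notin> munits"
  shows "u*y = y"
proof (rule ccontr)
  assume ne: "u*y \<noteq> y"
  then have u1: "u \<noteq> 1" by auto
  have uu: "u*u = 1" using unit_sq[OF U u] .
  have y1: "y \<noteq> 1" "y \<noteq> u" using y u one_unit by auto
  have uuy: "u*(u*y) = y" by (metis mult.assoc mult_1_left uu)
  have w1: "u*y \<noteq> 1" using uuy y1 by (metis mult_1_right)
  have w2: "u*y \<noteq> u" using uuy y1 uu by metis
  have e1: "setmul {1,u} {1,y} = {1,y,u,u*y}" by (rule p2)
  have e2: "setmul {1,u} {1,u*y} = {1,y,u,u*y}" unfolding p2 uuy by auto
  show False
  proof (rule conflict2[OF U irr2[OF u1] irr2[OF y1(1)] irr2[OF u1] irr2[OF w1]])
    show "setmul {1, u} {1, y} = setmul {1, u} {1, u * y}" unfolding e1 e2 ..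
    show "setmul {1, u} {1, y} \<noteq> {1, u}" unfolding e1 by (rule neqI[of y]) (use y1 in auto)
    show "setmul {1, u} {1, y} \<noteq> {1, y}" unfolding e1 by (rule neqI[of u]) (use y1 u1 in auto)
    show "setmul {1, u} {1, y} \<noteq> {1, u}" unfolding e1 by (rule neqI[of y]) (use y1 in auto)
    show "setmul {1, u} {1, y} \<noteq> {1, u*y}" unfolding e1 by (rule neqI[of u]) (use w2 u1 in auto)
    show "setmul {1, u} {1, y} \<noteq> {1}" unfolding e1 by (rule neqI[of u]) (use u1 in auto)
    show "setmul {1, u} {1, y} \<in> Pfin1" unfolding e1 by (simp add: Pfin1_def)
    have "{1,y} \<noteq> {1,u*y}" by (rule neqI[of y]) (use y1 ne in auto)
    then show "mset [{1, u}, {1, y}] \<noteq> mset [{1, u}, {1, u * y}]" by simp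
  qed
qed

lemma unit_right:
  assumes U: "UmF (Pfin1 :: 'a::monoid_mult set set) setmul {1}" and u: "(u::'a) \<in> munits"
    and y: "y \<notin> munits"
  shows "y*u = y"
proof (rule ccontr)
  assume ne: "y*u \<noteq> y"
  then have u1: "u \<noteq> 1" by auto
  have uu: "u*u = 1" using unit_sq[OF U u] .
  have y1: "y \<noteq> 1" "y \<noteq> u" using y u one_unit by auto
  have yuu: "y*u*u = y" by (metis mult.assoc mult_1_right uu)
  have w1: "y*u \<noteq> 1" using yuu y1 by (metis mult_1_left)
  have w2: "y*u \<noteq> u" using yuu y1 uu by metis
  have e1: "setmul {1,y} {1,u} = {1,u,y,y*u}" by (rule p2)
  have e2: "setmul {1,y*u} {1,u} = {1,u,y,y*u}" unfolding p2 yuu by auto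
  show False
  proof (rule conflict2[OF U irr2[OF y1(1)] irr2[OF u1] irr2[OF w1] irr2[OF u1]])
    show "setmul {1, y} {1, u} = setmul {1, y*u} {1, u}" unfolding e1 e2 ..
    show "setmul {1, y} {1, u} \<noteq> {1, u}" unfolding e1 by (rule neqI[of y]) (use y1 in auto)
    show "setmul {1, y} {1, u} \<noteq> {1, y}" unfolding e1 by (rule neqI[of u]) (use y1 u1 in auto)
    show "setmul {1, y} {1, u} \<noteq> {1, u}" unfolding e1 by (rule neqI[of y]) (use y1 in auto)
    show "setmul {1, y} {1, u} \<noteq> {1, y*u}" unfolding e1 by (rule neqI[of u]) (use w2 u1 in auto)
    show "setmul {1, y} {1, u} \<noteq> {1}" unfolding e1 by (rule neqI[of u]) (use u1 in auto)
    show "setmul {1, y} {1, u} \<in> Pfin1" unfolding e1 by (simp add: Pfin1_def)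
    have "{1,y} \<noteq> {1,y*u}" by (rule neqI[of y]) (use y1 ne in auto)
    then show "mset [{1, y}, {1, u}] \<noteq> mset [{1, y*u}, {1, u}]" by simp
  qed
qed


lemma idem:
  assumes U: "UmF (Pfin1 :: 'a::monoid_mult set set) setmul {1}" and x: "(x::'a) \<notin> munits"
  shows "x*x = x"
proof -
  have "x*x = 1 \<or> x*x = x" by (rule sq[OF U])
  moreover have "x*x \<noteq> 1" using x unfolding munits_def by blast
  ultimately show ?thesis by blast
qed

lemma closed:
  assumes U: "UmF (Pfin1 :: 'a::monoid_mult set set) setmul {1}" and x: "(x::'a) \<notin> munits"
    and y: "y \<notin> munits"
  shows "x*y \<notin> munits"
proof
  assume w: "x*y \<in> munits"
  then obtain v where v: "x*y*v = 1" "v*(x*y) = 1" unfolding munits_def by blast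
  have vu: "v \<in> munits" using v unfolding munits_def by blast
  have yv: "y*v = y" by (rule unit_right[OF U vu y])
  have xy: "x*y = 1" using v(1) yv by (simp add: mult.assoc)
  have "x = x*(x*y)" using xy by simp
  also have "\<dots> = x*y" using idem[OF U x] by (metis mult.assoc)
  finally have "x = 1" using xy by simp
  then show False using x one_unit by blast
qed

lemma breakable:
  assumes U: "UmF (Pfin1 :: 'a::monoid_mult set set) setmul {1}" and x: "(x::'a) \<notin> munits"
    and y: "y \<notin> munits"
  shows "x*y \<in> {x,y} \<or> y*x \<in> {x,y}"
proof (rule ccontr)
  assume h: "\<not> (x*y \<in> {x,y} \<or> y*x \<in> {x,y})"
  have xx: "x*x = x" by (rule idem[OF U x])
  have yy: "y*y = y" by (rule idem[OF U y])
  have xy: "x \<noteq> y" using h xx by auto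
  have x1: "x \<noteq> 1" and y1: "y \<noteq> 1" using x y one_unit by auto
  have xy1: "x*y \<noteq> 1" using closed[OF U x y] one_unit by auto
  have yx1: "y*x \<noteq> 1" using closed[OF U y x] one_unit by auto
  have xyn: "x*y \<notin> {1,x,y}" using h xy1 by auto
  have yxn: "y*x \<notin> {1,x,y}" using h yx1 by auto
  have iT: "mirreducible Pfin1 setmul {1} {1,x,y}"
    by (rule irr3) (use x1 y1 xy xx yy xyn yxn in auto)
  have e1: "setmul {1,x} {1,y} = {1,y,x,x*y}" by (rule p2)
  have e2: "setmul {1,x,y} {1,y} = {1,y,x,x*y}" by (auto simp: sm_ins yy)
  show False
  proof (rule conflict2[OF U irr2[OF x1] irr2[OF y1] iT irr2[OF y1]])
    show "setmul {1, x} {1, y} = setmul {1, x, y} {1, y}" unfolding e1 e2 ..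
    show "setmul {1, x} {1, y} \<noteq> {1, x}" unfolding e1 by (rule neqI[of y]) (use xy y1 in auto)
    show "setmul {1, x} {1, y} \<noteq> {1, y}" unfolding e1 by (rule neqI[of x]) (use xy x1 in auto)
    show "setmul {1, x} {1, y} \<noteq> {1, x, y}" unfolding e1 by (rule neqI[of "x*y"]) (use xyn in auto)
    show "setmul {1, x} {1, y} \<noteq> {1, y}" unfolding e1 by (rule neqI[of x]) (use xy x1 in auto)
    show "setmul {1, x} {1, y} \<noteq> {1}" unfolding e1 by (rule neqI[of x]) (use x1 in auto)
    show "setmul {1, x} {1, y} \<in> Pfin1" unfolding e1 by (simp add: Pfin1_def)
    have "{1,x} \<noteq> {1,x,y}" by (rule not_sym, rule neqI[of y]) (use xy y1 in auto)
    then show "mset [{1, x}, {1, y}] \<noteq> mset [{1, x, y}, {1, y}]" by simp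
  qed
qed

theorem lemma3p5:
  assumes "UmF (Pfin1 :: 'a::monoid_mult set set) setmul {1}"
  shows "(finite (munits :: 'a set) \<and> card (munits :: 'a set) \<le> 2)
    \<and> (\<forall>u\<in>(munits :: 'a set). \<forall>y. y \<notin> munits \<longrightarrow> u * y = y \<and> y * u = y)
    \<and> ((\<forall>x y. x \<notin> (munits :: 'a set) \<and> y \<notin> munits \<longrightarrow> x * y \<notin> munits)
         \<and> almost_breakable (- (munits :: 'a set)))"
proof (intro conjI)
  note U = assms
  have sub: "\<exists>u. (munits :: 'a set) \<subseteq> {1,u}"
  proof (cases "munits \<subseteq> {1::'a}")
    case True then show ?thesis by blast
  next
    case False
    then obtain u :: 'a where u: "u \<in> munits" "u \<noteq> 1" by blast
    then have "munits \<subseteq> {1,u}" using units_sub[OF U u] by blast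
    then show ?thesis by blast
  qed
  then obtain u :: 'a where su: "munits \<subseteq> {1,u}" by blast
  show "finite (munits :: 'a set)" using su finite_subset by blast
  have "card (munits :: 'a set) \<le> card {1,u}" using su by (intro card_mono) auto
  also have "\<dots> \<le> 2" by (simp add: card_insert_le_m1)
  finally show "card (munits :: 'a set) \<le> 2" .
  show "\<forall>u\<in>(munits :: 'a set). \<forall>y. y \<notin> munits \<longrightarrow> u * y = y \<and> y * u = y"
    using unit_left[OF U] unit_right[OF U] by blast
  show "\<forall>x y. x \<notin> (munits :: 'a set) \<and> y \<notin> munits \<longrightarrow> x * y \<notin> munits"
    using closed[OF U] by blast
  show "almost_breakable (- (munits :: 'a set))"
    unfolding almost_breakable_def using breakable[OF U] by blast
qed

end
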